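(* Let $\ell,m,n\in\mathbb{N}$, $\mathbf{p}_1,\dots,\mathbf{p}_m\in\mathrm{Prob}(n)$ and $\mathbf{s}\in\mathrm{Prob}(\ell)$. Then $$H\Big(\bigvee_{x\in[m]}(\mathbf{p}_x\otimes\mathbf{s})\Big)\le\log\ell+H\Big(\bigvee_{x\in[m]}\mathbf{p}_x\Big),$$ where $H$ is the Shannon entropy.
   Context: $H(\mathbf{p})=-\sum_i p_i\log p_i$. For $\mathbf{p},\mathbf{q}\in\mathrm{Prob}(N)$, $\mathbf{p}\succ\mathbf{q}$ means the sum of the $k$ largest entries of $\mathbf{p}$ is at least that of $\mathbf{q}$ for all $k$. For a finite set $\{\mathbf{a}_x\}\subset\mathrm{Prob}(N)$, $\bigvee_x\mathbf{a}_x$ denotes its optimal upper bound: the unique $\mathbf{q}\in\mathrm{Prob}^{\downarrow}(N)$ (non-increasing entries) with $\mathbf{q}\succ\mathbf{a}_x$ for all $x$ such that every $\mathbf{p}\in\mathrm{Prob}(N)$ with $\mathbf{p}\succ\mathbf{a}_x$ for all $x$ satisfies $\mathbf{p}\succ\mathbf{q}$. *)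

theory Defs
  imports Complex_Main
begin

text \<open>Probability vectors of length N are represented as functions nat \<Rightarrow> real,
  whose entries at indices 0..N-1 are the components.\<close>

definition Prob :: "nat \<Rightarrow> (nat \<Rightarrow> real) set" where
  "Prob N = {p. (\<forall>i<N. 0 \<le> p i) \<and> (\<Sum>i<N. p i) = 1}"

definition Prob_dec :: "nat \<Rightarrow> (nat \<Rightarrow> real) set" where
  "Prob_dec N = {p. p \<in> Prob N \<and> (\<forall>i j. i \<le> j \<and> j < N \<longrightarrow> p j \<le> p i)}"

definition topk :: "nat \<Rightarrow> (nat \<Rightarrow> real) \<Rightarrow> nat \<Rightarrow> real" where
  "topk N p k = Max {sum p S | S. S \<subseteq> {..<N} \<and> card S = k}"

definition majorizes :: "nat \<Rightarrow> (nat \<Rightarrow> real) \<Rightarrow> (nat \<Rightarrow> real) \<Rightarrow> bool" where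
  "majorizes N p q \<longleftrightarrow> (\<forall>k\<le>N. topk N q k \<le> topk N p k)"

text \<open>Optimal upper bound (join) of a set A of vectors in Prob(N); the
  representative is normalised to vanish outside {..<N}.\<close>
definition join :: "nat \<Rightarrow> (nat \<Rightarrow> real) set \<Rightarrow> (nat \<Rightarrow> real)" where
  "join N A = (THE q. q \<in> Prob_dec N \<and> (\<forall>i\<ge>N. q i = 0)
      \<and> (\<forall>a\<in>A. majorizes N q a)
      \<and> (\<forall>p\<in>Prob N. (\<forall>a\<in>A. majorizes N p a) \<longrightarrow> majorizes N p q))"

definition entropy :: "nat \<Rightarrow> (nat \<Rightarrow> real) \<Rightarrow> real" where
  "entropy N p = - (\<Sum>i<N. p i * ln (p i))"

text \<open>Tensor product p \<otimes> s with s of length l: entry (i,j) at index i*l+j.\<close>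
definition tensor :: "nat \<Rightarrow> (nat \<Rightarrow> real) \<Rightarrow> (nat \<Rightarrow> real) \<Rightarrow> (nat \<Rightarrow> real)" where
  "tensor l p s = (\<lambda>k. p (k div l) * s (k mod l))"

end

theory Submission
  imports Defs
begin

lemma topk_fin: "finite {sum (p::nat\<Rightarrow>real) S | S. S \<subseteq> {..<(N::nat)} \<and> card S = k}"
proof -
  have "{sum p S | S. S \<subseteq> {..<N} \<and> card S = k} \<subseteq> sum p ` Pow {..<N}" by auto
  moreover have "finite (sum p ` Pow {..<N})" by (rule finite_imageI) (rule iffD2[OF finite_Pow_iff], simp)
  ultimately show ?thesis by (rule finite_subset)
qed

lemma topk_ge: "S \<subseteq> {..<N} \<Longrightarrow> card S = k \<Longrightarrow> sum p S \<le> topk N p k"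
  unfolding topk_def by (rule Max_ge[OF topk_fin]) auto

lemma topk_attained:
  assumes "k \<le> N"
  shows "\<exists>S. S \<subseteq> {..<N} \<and> card S = k \<and> topk N p k = sum p S"
proof -
  have ne: "{sum p S | S. S \<subseteq> {..<N} \<and> card S = k} \<noteq> {}"
    using assms by (auto intro!: exI[of _ "{..<k}"])
  have "topk N p k \<in> {sum p S | S. S \<subseteq> {..<N} \<and> card S = k}"
    unfolding topk_def by (rule Max_in[OF topk_fin ne])
  then show ?thesis by auto
qed

lemma topk_concave:
  assumes "k + 2 \<le> N"
  shows "topk N p k + topk N p (k+2) \<le> 2 * topk N p (Suc k)"
proof -
  obtain S where S: "S \<subseteq> {..<N}" "card S = k+2" "topk N p (k+2) = sum p S"
    using topk_attained[of "k+2" N p] assms by auto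
  obtain T where T: "T \<subseteq> {..<N}" "card T = k" "topk N p k = sum p T"
    using topk_attained[of k N p] assms by auto
  have fS: "finite S" and fT: "finite T" using S(1) T(1) finite_subset by auto
  have "\<not> S \<subseteq> T"
  proof
    assume "S \<subseteq> T"
    then have "card S \<le> card T" by (rule card_mono[OF fT])
    then show False using S(2) T(2) by simp
  qed
  then obtain x where x: "x \<in> S" "x \<notin> T" by auto
  have c1: "card (S - {x}) = Suc k" using S(2) x fS by simp
  have c2: "card (insert x T) = Suc k" using T(2) x fT by simp
  have "sum p (S - {x}) \<le> topk N p (Suc k)" using S(1) c1 by (intro topk_ge) auto
  moreover have "sum p (insert x T) \<le> topk N p (Suc k)" using S(1) T(1) x c2 by (intro topk_ge) auto
  moreover have "sum p (S - {x}) = sum p S - p x" using x fS by (simp add: sum_diff1)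
  moreover have "sum p (insert x T) = sum p T + p x" using x fT by simp
  ultimately show ?thesis using S(3) T(3) by linarith
qed

lemma topk_mono:
  assumes "k < N" "\<forall>i<N. 0 \<le> p i"
  shows "topk N p k \<le> topk N p (Suc k)"
proof -
  obtain T where T: "T \<subseteq> {..<N}" "card T = k" "topk N p k = sum p T"
    using topk_attained[of k N p] assms by auto
  have fT: "finite T" using T(1) finite_subset by auto
  have "\<not> {..<N} \<subseteq> T"
  proof
    assume "{..<N} \<subseteq> T"
    then have "card {..<N} \<le> card T" by (rule card_mono[OF fT])
    then show False using T(2) assms(1) by simp
  qed
  then obtain x where x: "x < N" "x \<notin> T" by auto
  have "sum p (insert x T) \<le> topk N p (Suc k)" using T x fT by (intro topk_ge) auto
  moreover have "sum p (insert x T) = sum p T + p x" using x fT by simp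
  moreover have "0 \<le> p x" using assms(2) x by simp
  ultimately show ?thesis using T(3) by linarith
qed

lemma topk_nonneg:
  assumes "k \<le> N" "\<forall>i<N. 0 \<le> p i"
  shows "0 \<le> topk N p k"
proof -
  have "sum p {..<k} \<le> topk N p k" using assms by (intro topk_ge) auto
  moreover have "0 \<le> sum p {..<k}" using assms by (intro sum_nonneg) auto
  ultimately show ?thesis by linarith
qed

lemma topk_zero: "topk N p 0 = 0"
proof -
  obtain S where "S \<subseteq> {..<N}" "card S = 0" "topk N p 0 = sum p S"
    using topk_attained[of 0 N p] by auto
  moreover then have "finite S" using finite_subset by blast
  ultimately show ?thesis by simp
qed

lemma topk_le1:
  assumes "p \<in> Prob N" "k \<le> N"
  shows "topk N p k \<le> 1"
proof -
  obtain S where S: "S \<subseteq> {..<N}" "card S = k" "topk N p k = sum p S"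
    using topk_attained[of k N p] assms by auto
  have "sum p S \<le> sum p {..<N}" using S assms by (intro sum_mono2) (auto simp: Prob_def)
  then show ?thesis using S assms by (simp add: Prob_def)
qed

lemma topk_full:
  assumes "p \<in> Prob N"
  shows "1 \<le> topk N p N"
  using topk_ge[of "{..<N}" N N p] assms by (simp add: Prob_def)

lemma topk_sorted:
  assumes dec: "\<forall>i j. i \<le> j \<and> j < N \<longrightarrow> q j \<le> q i" and k: "k \<le> N"
  shows "topk N q k = sum q {..<k}"
proof -
  obtain S where S: "S \<subseteq> {..<N}" "card S = k" "topk N q k = sum q S"
    using topk_attained[of k N q] k by auto
  have fS: "finite S" using S(1) finite_subset by auto
  have ge: "sum q {..<k} \<le> topk N q k" using k by (intro topk_ge) auto
  have "sum q S \<le> sum q {..<k}"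
  proof (cases "k < N")
    case True
    have e1: "sum q S = sum q (S \<inter> {..<k}) + sum q (S - {..<k})"
      using sum.Int_Diff[OF fS, of q "{..<k}"] by simp
    have e2: "sum q {..<k} = sum q (S \<inter> {..<k}) + sum q ({..<k} - S)"
      using sum.Int_Diff[of "{..<k}" q S] by (simp add: Int_commute)
    have cA: "card (S - {..<k}) = card S - card (S \<inter> {..<k})"
      using card_Diff_subset_Int[of S "{..<k}"] fS by simp
    have cB: "card ({..<k} - S) = k - card (S \<inter> {..<k})"
      using card_Diff_subset_Int[of "{..<k}" S] by (simp add: Int_commute)
    have cE: "card (S - {..<k}) = card ({..<k} - S)" using cA cB S(2) by simp
    have b1: "q i \<le> q k" if "i \<in> S - {..<k}" for i
    proof -
      have "k \<le> i" "i < N" using that S(1) by auto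
      then show ?thesis using dec by blast
    qed
    have b2: "q k \<le> q i" if "i \<in> {..<k} - S" for i
    proof -
      have "i \<le> k" using that by auto
      then show ?thesis using dec True by blast
    qed
    have "sum q (S - {..<k}) \<le> of_nat (card (S - {..<k})) * q k"
      using b1 by (rule sum_bounded_above)
    moreover have "of_nat (card ({..<k} - S)) * q k \<le> sum q ({..<k} - S)"
      using b2 by (rule sum_bounded_below)
    moreover have "real (card (S - {..<k})) * q k = real (card ({..<k} - S)) * q k" using cE by simp
    ultimately show ?thesis using e1 e2 by linarith
  next
    case False
    then have "k = N" using k by simp
    then have "S = {..<N}" using S(1) S(2) card_subset_eq[of "{..<N}" S] by simp
    then show ?thesis using \<open>k = N\<close> by simp
  qed
  then show ?thesis using ge S(3) by linarith
qed

definition conc :: "nat \<Rightarrow> (nat \<Rightarrow> real) \<Rightarrow> bool" where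
  "conc N G \<longleftrightarrow> (\<forall>k. k+2 \<le> N \<longrightarrow> G k + G (k+2) \<le> 2 * G (Suc k))"

definition fam :: "nat \<Rightarrow> (nat\<Rightarrow>real) set \<Rightarrow> (nat \<Rightarrow> real) \<Rightarrow> bool" where
  "fam N A G \<longleftrightarrow> conc N G \<and> (\<forall>k<N. G k \<le> G (Suc k)) \<and> (\<forall>k\<le>N. 0 \<le> G k) \<and> 1 \<le> G N
     \<and> (\<forall>a\<in>A. \<forall>k\<le>N. topk N a k \<le> G k)"

definition env :: "nat \<Rightarrow> (nat\<Rightarrow>real) set \<Rightarrow> nat \<Rightarrow> real" where
  "env N A k = Inf {G k | G. fam N A G}"

lemma fam_G0:
  assumes "1 \<le> N" "A \<subseteq> Prob N"
  shows "fam N A (\<lambda>k. if k = 0 then 0 else 1)"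
proof -
  have "topk N a k \<le> (if k = 0 then 0 else 1)" if "a \<in> A" "k \<le> N" for a k
    using topk_le1[of a N k] topk_zero[of N a] that assms by auto
  then show ?thesis using assms unfolding fam_def conc_def by auto
qed

lemma fam_topk:
  assumes "p \<in> Prob N" "\<forall>a\<in>A. majorizes N p a"
  shows "fam N A (topk N p)"
proof -
  have nn: "\<forall>i<N. 0 \<le> p i" using assms(1) by (simp add: Prob_def)
  show ?thesis unfolding fam_def conc_def
    using topk_concave[of _ N p] topk_mono[OF _ nn] topk_nonneg[OF _ nn] topk_full[OF assms(1)]
      assms(2) unfolding majorizes_def by auto
qed

lemma env_le:
  assumes "fam N A G" "k \<le> N"
  shows "env N A k \<le> G k"
  unfolding env_def
proof (rule cInf_lower)
  show "G k \<in> {G k |G. fam N A G}" using assms by auto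
  show "bdd_below {G k |G. fam N A G}"
    by (rule bdd_belowI[of _ 0]) (use assms(2) in \<open>auto simp: fam_def\<close>)
qed

lemma env_ge:
  assumes "fam N A G0" "\<And>G. fam N A G \<Longrightarrow> c \<le> G k"
  shows "c \<le> env N A k"
  unfolding env_def
  by (rule cInf_greatest) (use assms in auto)

locale joinctx =
  fixes N :: nat and A :: "(nat \<Rightarrow> real) set"
  assumes N1: "1 \<le> N" and AP: "A \<subseteq> Prob N"
begin

abbreviation "F \<equiv> env N A"
lemma G0: "fam N A (\<lambda>k. if k = 0 then 0 else 1)" using fam_G0[OF N1 AP] .

lemma F0: "F 0 = 0"
proof -
  have "F 0 \<le> 0" using env_le[OF G0, of 0] by simp
  moreover have "0 \<le> F 0" by (rule env_ge[OF G0]) (auto simp: fam_def)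
  ultimately show ?thesis by simp
qed

lemma FN: "F N = 1"
proof -
  have "F N \<le> 1" using env_le[OF G0, of N] N1 by simp
  moreover have "1 \<le> F N" by (rule env_ge[OF G0]) (auto simp: fam_def)
  ultimately show ?thesis by simp
qed

lemma Fconc: "k+2 \<le> N \<Longrightarrow> F k + F (k+2) \<le> 2 * F (Suc k)"
proof -
  assume k: "k+2 \<le> N"
  have "(F k + F (k+2)) / 2 \<le> F (Suc k)"
  proof (rule env_ge[OF G0])
    fix G assume G: "fam N A G"
    have "F k \<le> G k" "F (k+2) \<le> G (k+2)" using env_le[OF G] k by auto
    moreover have "G k + G (k+2) \<le> 2 * G (Suc k)" using G k by (auto simp: fam_def conc_def)
    ultimately have "F k + F (k+2) \<le> 2 * G (Suc k)" by linarith
    then show "(F k + F (k+2)) / 2 \<le> G (Suc k)" by (simp add: field_simps)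
  qed
  then show ?thesis by (simp add: field_simps)
qed

lemma Fmono: "k < N \<Longrightarrow> F k \<le> F (Suc k)"
proof -
  assume k: "k < N"
  show ?thesis
  proof (rule env_ge[OF G0])
    fix G assume G: "fam N A G"
    have "F k \<le> G k" using env_le[OF G] k by auto
    moreover have "G k \<le> G (Suc k)" using G k by (auto simp: fam_def)
    ultimately show "F k \<le> G (Suc k)" by linarith
  qed
qed

lemma Fge: "a \<in> A \<Longrightarrow> k \<le> N \<Longrightarrow> topk N a k \<le> F k"
  by (rule env_ge[OF G0]) (auto simp: fam_def)

definition q :: "nat \<Rightarrow> real" where "q i = (if i < N then F (Suc i) - F i else 0)"

lemma q_step: "Suc j < N \<Longrightarrow> q (Suc j) \<le> q j"
  using Fconc[of j] by (simp add: q_def)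

lemma q_dec: "i \<le> j \<Longrightarrow> j < N \<Longrightarrow> q j \<le> q i"
proof (induction j rule: dec_induct)
  case base then show ?case by simp
next
  case (step j) then show ?case using q_step[of j] by simp
qed

lemma q_sum: "k \<le> N \<Longrightarrow> sum q {..<k} = F k"
proof -
  assume k: "k \<le> N"
  have "sum q {..<k} = (\<Sum>i<k. F (Suc i) - F i)" using k by (intro sum.cong) (auto simp: q_def)
  also have "\<dots> = F k - F 0" by (rule sum_lessThan_telescope)
  finally show ?thesis using F0 by simp
qed

lemma q_Prob_dec: "q \<in> Prob_dec N"
  using q_dec q_sum[of N] FN Fmono unfolding Prob_dec_def Prob_def by (auto simp: q_def)

lemma q_topk: "k \<le> N \<Longrightarrow> topk N q k = F k"
  using topk_sorted[of N q k] q_dec q_sum by auto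

lemma q_props: "q \<in> Prob_dec N \<and> (\<forall>i\<ge>N. q i = 0)
      \<and> (\<forall>a\<in>A. majorizes N q a)
      \<and> (\<forall>p\<in>Prob N. (\<forall>a\<in>A. majorizes N p a) \<longrightarrow> majorizes N p q)"
proof (intro conjI ballI impI allI)
  show "q \<in> Prob_dec N" by (rule q_Prob_dec)
  show "N \<le> i \<Longrightarrow> q i = 0" for i by (simp add: q_def)
  show "majorizes N q a" if "a \<in> A" for a
    unfolding majorizes_def using q_topk Fge[OF that] by auto
  show "majorizes N p q" if "p \<in> Prob N" "\<forall>a\<in>A. majorizes N p a" for p
    unfolding majorizes_def using q_topk env_le[OF fam_topk[OF that]] by auto
qed

end

lemma join_unique:
  assumes "q1 \<in> Prob_dec N \<and> (\<forall>i\<ge>N. q1 i = 0) \<and> (\<forall>a\<in>A. majorizes N q1 a)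
      \<and> (\<forall>p\<in>Prob N. (\<forall>a\<in>A. majorizes N p a) \<longrightarrow> majorizes N p q1)"
  and "q2 \<in> Prob_dec N \<and> (\<forall>i\<ge>N. q2 i = 0) \<and> (\<forall>a\<in>A. majorizes N q2 a)
      \<and> (\<forall>p\<in>Prob N. (\<forall>a\<in>A. majorizes N p a) \<longrightarrow> majorizes N p q2)"
  shows "q1 = q2"
proof
  fix i
  have m12: "majorizes N q1 q2" and m21: "majorizes N q2 q1"
    using assms unfolding Prob_dec_def by auto
  have d1: "\<forall>i j. i \<le> j \<and> j < N \<longrightarrow> q1 j \<le> q1 i" and d2: "\<forall>i j. i \<le> j \<and> j < N \<longrightarrow> q2 j \<le> q2 i"
    using assms unfolding Prob_dec_def by auto
  have eq: "sum q1 {..<k} = sum q2 {..<k}" if "k \<le> N" for k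
    using m12 m21 that topk_sorted[OF d1 that] topk_sorted[OF d2 that]
    unfolding majorizes_def by force
  show "q1 i = q2 i"
  proof (cases "i < N")
    case True
    have h1: "sum q1 {..<Suc i} = sum q2 {..<Suc i}" using eq[of "Suc i"] True by simp
    have h2: "sum q1 {..<i} = sum q2 {..<i}" using eq[of i] True by simp
    from h1 h2 show ?thesis by simp
  next
    case False then show ?thesis using assms by auto
  qed
qed

lemma join_props:
  assumes "1 \<le> N" "A \<subseteq> Prob N"
  shows "join N A \<in> Prob_dec N \<and> (\<forall>i\<ge>N. join N A i = 0)
      \<and> (\<forall>a\<in>A. majorizes N (join N A) a)
      \<and> (\<forall>p\<in>Prob N. (\<forall>a\<in>A. majorizes N p a) \<longrightarrow> majorizes N p (join N A))"
proof -
  interpret joinctx N A using assms by unfold_locales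
  let ?P = "\<lambda>x. x \<in> Prob_dec N \<and> (\<forall>i\<ge>N. x i = 0)
      \<and> (\<forall>a\<in>A. majorizes N x a)
      \<and> (\<forall>p\<in>Prob N. (\<forall>a\<in>A. majorizes N p a) \<longrightarrow> majorizes N p x)"
  have "?P q" by (rule q_props)
  moreover have "\<And>x. ?P x \<Longrightarrow> x = q" using join_unique q_props by blast
  ultimately have "?P (THE x. ?P x)" by (rule theI)
  then show ?thesis unfolding join_def by simp
qed

lemma tangent:
  fixes x y :: real
  assumes "0 \<le> x" "0 < y"
  shows "(ln y + 1) * (x - y) \<le> x * ln x - y * ln y"
proof (cases "x = 0")
  case True then show ?thesis using assms by (simp add: algebra_simps)
next
  case False
  then have x: "0 < x" using assms by simp
  have "ln (y / x) \<le> y / x - 1" using x assms by (intro ln_le_minus_one) simp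
  then have "ln y - ln x \<le> y / x - 1" using x assms by (simp add: ln_div)
  then have "x * (ln y - ln x) \<le> x * (y / x - 1)" using x by (intro mult_left_mono) auto
  then have "x * ln y - x * ln x \<le> y - x" using x by (simp add: algebra_simps)
  then show ?thesis by (simp add: algebra_simps)
qed

lemma abel:
  fixes c d :: "nat \<Rightarrow> real"
  assumes "\<forall>i j. i \<le> j \<and> j < r \<longrightarrow> c j \<le> c i" "\<forall>k\<le>r. 0 \<le> sum d {..<k}"
  shows "t < r \<Longrightarrow> c t * sum d {..<Suc t} \<le> (\<Sum>i<Suc t. c i * d i)"
proof (induction t)
  case 0 then show ?case by simp
next
  case (Suc t)
  then have IH: "c t * sum d {..<Suc t} \<le> (\<Sum>i<Suc t. c i * d i)" by simp
  have "c (Suc t) \<le> c t" using assms(1) Suc.prems by auto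
  moreover have "Suc t \<le> r" using Suc.prems by simp
  then have "0 \<le> sum d {..<Suc t}" using assms(2) by blast
  ultimately have "c (Suc t) * sum d {..<Suc t} \<le> c t * sum d {..<Suc t}"
    by (intro mult_right_mono) auto
  then have "c (Suc t) * sum d {..<Suc (Suc t)} \<le> (\<Sum>i<Suc t. c i * d i) + c (Suc t) * d (Suc t)"
    using IH by (simp add: algebra_simps)
  then show ?case by simp
qed

lemma sum_split_at:
  fixes f :: "nat \<Rightarrow> real"
  assumes "r \<le> N"
  shows "sum f {..<N} = sum f {..<r} + sum f {r..<N}"
  using sum.atLeastLessThan_concat[of 0 r N f] assms by (simp add: lessThan_atLeast0)

lemma schur:
  assumes Q: "Q \<in> Prob_dec N" and R: "R \<in> Prob_dec N" and maj: "majorizes N Q R"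
  shows "entropy N Q \<le> entropy N R"
proof -
  have dQ: "\<forall>i j. i \<le> j \<and> j < N \<longrightarrow> Q j \<le> Q i" and dR: "\<forall>i j. i \<le> j \<and> j < N \<longrightarrow> R j \<le> R i"
    using Q R by (auto simp: Prob_dec_def)
  have nQ: "\<forall>i<N. 0 \<le> Q i" and sQ: "sum Q {..<N} = 1" using Q by (auto simp: Prob_dec_def Prob_def)
  have nR: "\<forall>i<N. 0 \<le> R i" and sR: "sum R {..<N} = 1" using R by (auto simp: Prob_dec_def Prob_def)
  have ps: "sum R {..<k} \<le> sum Q {..<k}" if "k \<le> N" for k
  proof -
    have "topk N R k \<le> topk N Q k" using maj that by (simp add: majorizes_def)
    then show ?thesis using topk_sorted[OF dQ that] topk_sorted[OF dR that] by simp
  qed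
  obtain r where r: "r \<le> N" "\<forall>i<r. 0 < R i" "\<forall>i. r \<le> i \<and> i < N \<longrightarrow> R i = 0"
  proof (cases "\<exists>i<N. R i = 0")
    case True
    define r where "r = (LEAST i. i < N \<and> R i = 0)"
    have rr: "r < N \<and> R r = 0" unfolding r_def using True by (metis (mono_tags, lifting) LeastI)
    have "\<forall>i<r. 0 < R i"
    proof (intro allI impI)
      fix i assume "i < r"
      then have "\<not> (i < N \<and> R i = 0)" unfolding r_def by (rule not_less_Least)
      moreover have "i < N" using \<open>i < r\<close> rr by simp
      moreover have "0 \<le> R i" using nR calculation(2) by simp
      ultimately show "0 < R i" by simp
    qed
    moreover have "\<forall>i. r \<le> i \<and> i < N \<longrightarrow> R i = 0"
    proof (intro allI impI)
      fix i assume "r \<le> i \<and> i < N"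
      then have "R i \<le> R r" "0 \<le> R i" using dR nR by auto
      then show "R i = 0" using rr by simp
    qed
    ultimately show ?thesis using that[of r] rr by simp
  next
    case False
    then show ?thesis using that[of N] nR by force
  qed
  have tailR: "sum R {r..<N} = 0" using r(3) by (intro sum.neutral) auto
  have sR1: "sum R {..<r} = 1" using sum_split_at[OF r(1), of R] tailR sR by simp
  have "1 \<le> sum Q {..<r}" using ps[OF r(1)] sR1 by simp
  moreover have tQn: "0 \<le> sum Q {r..<N}" using nQ by (intro sum_nonneg) auto
  moreover have "sum Q {..<N} = sum Q {..<r} + sum Q {r..<N}" by (rule sum_split_at[OF r(1)])
  ultimately have tailQ: "sum Q {r..<N} = 0" and sQ1: "sum Q {..<r} = 1" using sQ by linarith+
  have Qz: "Q i = 0" if "r \<le> i" "i < N" for i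
    using tailQ nQ that sum_nonneg_eq_0_iff[of "{r..<N}" Q] by auto
  define c where "c i = ln (R i) + 1" for i
  define d where "d i = Q i - R i" for i
  define g where "g i = Q i * ln (Q i) - R i * ln (R i)" for i
  have g_tail: "sum g {r..<N} = 0" using Qz r(3) by (intro sum.neutral) (auto simp: g_def)
  have g_ge: "(\<Sum>i<r. c i * d i) \<le> sum g {..<r}"
    by (rule sum_mono) (use r nQ tangent in \<open>auto simp: c_def d_def g_def\<close>)
  have abel_ge: "0 \<le> (\<Sum>i<r. c i * d i)"
  proof (cases r)
    case 0 then show ?thesis by simp
  next
    case (Suc t)
    have cdec: "\<forall>i j. i \<le> j \<and> j < r \<longrightarrow> c j \<le> c i"
      using r dR by (auto simp: c_def)
    have Dk: "\<forall>k\<le>r. 0 \<le> sum d {..<k}"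
      using ps r(1) by (auto simp: d_def sum_subtractf)
    have "c t * sum d {..<Suc t} \<le> (\<Sum>i<Suc t. c i * d i)"
      using abel[OF cdec Dk, of t] Suc by simp
    moreover have "sum d {..<r} = 0" using sQ1 sR1 by (simp add: d_def sum_subtractf)
    ultimately show ?thesis using Suc by simp
  qed
  have "0 \<le> sum g {..<N}" using sum_split_at[OF r(1), of g] g_tail g_ge abel_ge by linarith
  then show ?thesis unfolding entropy_def g_def by (simp add: sum_subtractf)
qed

lemma sum_add_split: "sum (f::nat\<Rightarrow>real) {..<x + y} = sum f {..<x} + (\<Sum>j<y. f (x + j))"
  by (induction y) auto

lemma sum_blocks: "sum (f::nat\<Rightarrow>real) {..<n*l} = (\<Sum>i<n. \<Sum>j<l. f (i*l + j))"
proof (induction n)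
  case 0 then show ?case by simp
next
  case (Suc n)
  have "Suc n * l = n*l + l" by simp
  then show ?case using Suc sum_add_split[of f "n*l" l] by (simp add: add.commute)
qed

lemma idx_lt: "i < (n::nat) \<Longrightarrow> j < l \<Longrightarrow> i*l + j < n*l"
proof -
  assume a: "i < n" "j < l"
  have "i*l + j < Suc i * l" using a by simp
  also have "\<dots> \<le> n*l" using a by (intro mult_le_mono1) simp
  finally show ?thesis .
qed

lemma idx_div: "j < (l::nat) \<Longrightarrow> (i*l + j) div l = i" by simp
lemma idx_mod: "j < (l::nat) \<Longrightarrow> (i*l + j) mod l = j" by simp

lemma avg:
  fixes c :: "nat \<Rightarrow> real"
  assumes dec: "\<forall>i j. i \<le> j \<and> j < l \<longrightarrow> c j \<le> c i" and b: "b \<le> l"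
  shows "real b * sum c {..<l} \<le> real l * sum c {..<b}"
proof -
  have e: "(\<Sum>j<b. \<Sum>i<l. c j - c i) = real l * sum c {..<b} - real b * sum c {..<l}"
    by (simp add: sum_subtractf sum_distrib_left sum_distrib_right)
  have z: "(\<Sum>j<b. \<Sum>i<b. c j - c i) = 0"
    by (simp add: sum_subtractf sum_distrib_left sum_distrib_right)
  have sp: "(\<Sum>j<b. \<Sum>i<l. c j - c i) = (\<Sum>j<b. \<Sum>i<b. c j - c i) + (\<Sum>j<b. \<Sum>i\<in>{b..<l}. c j - c i)"
    using sum_split_at[OF b] by (simp add: sum.distrib)
  have "0 \<le> (\<Sum>j<b. \<Sum>i\<in>{b..<l}. c j - c i)"
  proof (intro sum_nonneg)
    fix j i assume "j \<in> {..<b}" "i \<in> {b..<l}"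
    then have "j \<le> i \<and> i < l" by auto
    then show "0 \<le> c j - c i" using dec by auto
  qed
  then show ?thesis using e z sp by linarith
qed

lemma tensor_Prob:
  assumes "p \<in> Prob n" "s \<in> Prob l"
  shows "tensor l p s \<in> Prob (n*l)"
proof -
  have l: "0 < l" using assms(2) by (auto simp: Prob_def intro: Nat.gr0I)
  have nn: "0 \<le> tensor l p s k" if "k < n*l" for k
  proof -
    have "k div l < n" using that by (simp add: less_mult_imp_div_less)
    moreover have "k mod l < l" using l by simp
    ultimately show ?thesis using assms unfolding tensor_def Prob_def by (simp add: mult_nonneg_nonneg)
  qed
  have "sum (tensor l p s) {..<n*l} = (\<Sum>i<n. \<Sum>j<l. p i * s j)"
    unfolding sum_blocks by (intro sum.cong refl) (simp add: tensor_def idx_div idx_mod)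
  also have "\<dots> = (\<Sum>i<n. p i)" using assms(2) by (simp add: sum_distrib_left[symmetric] Prob_def)
  also have "\<dots> = 1" using assms(1) by (simp add: Prob_def)
  finally show ?thesis using nn by (simp add: Prob_def)
qed

theorem mainTheorem18:
  fixes l m n :: nat and p :: "nat \<Rightarrow> nat \<Rightarrow> real" and s :: "nat \<Rightarrow> real"
  assumes "\<And>x. x \<in> {1..m} \<Longrightarrow> p x \<in> Prob n"
    and "s \<in> Prob l"
  shows "entropy (n * l) (join (n * l) ((\<lambda>x. tensor l (p x) s) ` {1..m}))
           \<le> ln (real l) + entropy n (join n (p ` {1..m}))"
proof -
  have l1: "1 \<le> l" using assms(2) by (cases l) (auto simp: Prob_def)
  show ?thesis
  proof (cases "n = 0")
    case True
    then show ?thesis using l1 by (simp add: entropy_def)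
  next
    case False
    then have n1: "1 \<le> n" by simp
    have nl1: "1 \<le> n*l" using n1 l1 by simp
    define AQ where "AQ = (\<lambda>x. tensor l (p x) s) ` {1..m}"
    define AP where "AP = p ` {1..m}"
    have AQP: "AQ \<subseteq> Prob (n*l)" unfolding AQ_def using assms tensor_Prob by auto
    have APP: "AP \<subseteq> Prob n" unfolding AP_def using assms by auto
    define Q where "Q = join (n*l) AQ"
    define P where "P = join n AP"
    note JQ = join_props[OF nl1 AQP, folded Q_def]
    note JP = join_props[OF n1 APP, folded P_def]
    have QP: "Q \<in> Prob_dec (n*l)" using JQ by blast
    have dQ: "\<forall>i j. i \<le> j \<and> j < n*l \<longrightarrow> Q j \<le> Q i" and nQ: "\<forall>i<n*l. 0 \<le> Q i"
      and sQ: "sum Q {..<n*l} = 1" using QP by (auto simp: Prob_dec_def Prob_def)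
    define R where "R i = (\<Sum>j<l. Q (i*l + j))" for i
    have sumR: "sum R {..<k} = sum Q {..<k*l}" for k
      unfolding R_def sum_blocks by simp
    have dR: "\<forall>i j. i \<le> j \<and> j < n \<longrightarrow> R j \<le> R i"
    proof (intro allI impI)
      fix i j assume ij: "i \<le> j \<and> j < n"
      show "R j \<le> R i" unfolding R_def
      proof (rule sum_mono)
        fix t assume "t \<in> {..<l}"
        then have "i*l + t \<le> j*l + t" "j*l + t < n*l" using ij idx_lt by (auto intro: mult_le_mono1)
        then show "Q (j*l + t) \<le> Q (i*l + t)" using dQ by blast
      qed
    qed
    have RP: "R \<in> Prob_dec n"
    proof -
      have "0 \<le> R i" if "i < n" for i
        unfolding R_def using nQ idx_lt that by (intro sum_nonneg) auto
      moreover have "sum R {..<n} = 1" using sumR[of n] sQ by simp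
      ultimately show ?thesis using dR by (simp add: Prob_dec_def Prob_def)
    qed
    have topkR: "topk n R k = topk (n*l) Q (k*l)" if "k \<le> n" for k
    proof -
      have "k*l \<le> n*l" using that by simp
      then show ?thesis using topk_sorted[OF dR that] topk_sorted[OF dQ] sumR by simp
    qed
    have majR: "majorizes n R a" if aAP: "a \<in> AP" for a
      unfolding majorizes_def
    proof (intro allI impI)
      fix k assume k: "k \<le> n"
      obtain x where x: "x \<in> {1..m}" "a = p x" using aAP unfolding AP_def by auto
      have tin: "tensor l (p x) s \<in> AQ" using x unfolding AQ_def by auto
      obtain S where S: "S \<subseteq> {..<n}" "card S = k" "topk n a k = sum a S"
        using topk_attained[OF k] by blast
      have fS: "finite S" using S(1) finite_subset by blast
      define h where "h = (\<lambda>(i::nat,j::nat). i*l + j)"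
      have inj: "inj_on h (S \<times> {..<l})"
      proof (rule inj_onI)
        fix u v assume "u \<in> S \<times> {..<l}" "v \<in> S \<times> {..<l}" "h u = h v"
        then obtain i j i' j' where u: "u = (i,j)" "j < l" and v: "v = (i',j')" "j' < l"
          and e: "i*l + j = i'*l + j'" by (auto simp: h_def)
        have "i = i'" using idx_div[OF u(2), of i] idx_div[OF v(2), of i'] e by simp
        moreover have "j = j'" using idx_mod[OF u(2), of i] idx_mod[OF v(2), of i'] e by simp
        ultimately show "u = v" using u v by simp
      qed
      have sub: "h ` (S \<times> {..<l}) \<subseteq> {..<n*l}"
        using S(1) idx_lt by (auto simp: h_def)
      have card: "card (h ` (S \<times> {..<l})) = k*l"
        using card_image[OF inj] S(2) fS by (simp add: card_cartesian_product)
      have "sum (tensor l (p x) s) (h ` (S \<times> {..<l})) = (\<Sum>u\<in>S \<times> {..<l}. tensor l (p x) s (h u))"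
        by (rule sum.reindex[OF inj, unfolded comp_def])
      also have "\<dots> = (\<Sum>u\<in>S \<times> {..<l}. p x (fst u) * s (snd u))"
        by (intro sum.cong refl) (auto simp: h_def tensor_def)
      also have "\<dots> = (\<Sum>i\<in>S. \<Sum>j<l. p x i * s j)"
        by (simp add: sum.cartesian_product case_prod_beta)
      also have "\<dots> = sum (p x) S" using assms(2) by (simp add: sum_distrib_left[symmetric] Prob_def)
      finally have e1: "sum (tensor l (p x) s) (h ` (S \<times> {..<l})) = sum a S" using x by simp
      have "sum a S \<le> topk (n*l) (tensor l (p x) s) (k*l)"
        using topk_ge[OF sub card, of "tensor l (p x) s"] e1 by simp
      also have "\<dots> \<le> topk (n*l) Q (k*l)"
        using JQ tin k unfolding majorizes_def by auto
      finally show "topk n a k \<le> topk n R k" using S(3) topkR[OF k] by simp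
    qed
    have "majorizes n R P" using JP RP majR unfolding Prob_dec_def by blast
    then have HR: "entropy n R \<le> entropy n P" using schur[OF RP _] JP by blast
    define R' where "R' k = R (k div l) / l" for k
    have lpos: "0 < real l" using l1 by simp
    have R'blk: "R' (i*l + j) = R i / l" if "j < l" for i j
      using that by (simp add: R'_def idx_div)
    have sumR': "sum R' {..<k*l} = sum R {..<k}" for k
    proof -
      have "sum R' {..<k*l} = (\<Sum>i<k. \<Sum>j<l. R i / l)"
        unfolding sum_blocks by (intro sum.cong refl) (simp add: R'blk)
      also have "\<dots> = sum R {..<k}" using lpos by simp
      finally show ?thesis .
    qed
    have dR': "\<forall>i j. i \<le> j \<and> j < n*l \<longrightarrow> R' j \<le> R' i"
    proof (intro allI impI)
      fix i j assume ij: "i \<le> j \<and> j < n*l"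
      then have "i div l \<le> j div l" "j div l < n" by (auto simp: div_le_mono less_mult_imp_div_less)
      then have "R (j div l) \<le> R (i div l)" using dR by blast
      then show "R' j \<le> R' i" unfolding R'_def using lpos by (simp add: divide_right_mono)
    qed
    have R'P: "R' \<in> Prob_dec (n*l)"
    proof -
      have nR: "\<forall>i<n. 0 \<le> R i" using RP by (simp add: Prob_dec_def Prob_def)
      have "0 \<le> R' i" if "i < n*l" for i
      proof -
        have "i div l < n" using that by (simp add: less_mult_imp_div_less)
        then show ?thesis using nR lpos by (simp add: R'_def)
      qed
      moreover have "sum R' {..<n*l} = 1" using sumR' RP by (simp add: Prob_dec_def Prob_def)
      ultimately show ?thesis using dR' by (simp add: Prob_dec_def Prob_def)
    qed
    have majQ: "majorizes (n*l) Q R'"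
      unfolding majorizes_def
    proof (intro allI impI)
      fix K assume K: "K \<le> n*l"
      define a where "a = K div l"
      define b where "b = K mod l"
      have Kab: "K = a*l + b" unfolding a_def b_def by simp
      have bl: "b < l" unfolding b_def using l1 by simp
      have "(\<Sum>j<b. R' (a*l + j)) \<le> (\<Sum>j<b. Q (a*l + j))"
      proof (cases "b = 0")
        case True then show ?thesis by simp
      next
        case False
        have "a*l < n*l" using K Kab False by linarith
        then have an: "a < n" using l1 by simp
        have cdec: "\<forall>i j. i \<le> j \<and> j < l \<longrightarrow> Q (a*l + j) \<le> Q (a*l + i)"
        proof (intro allI impI)
          fix i j assume "i \<le> j \<and> j < l"
          then have "a*l + i \<le> a*l + j" "a*l + j < n*l" using idx_lt[OF an] by auto
          then show "Q (a*l + j) \<le> Q (a*l + i)" using dQ by blast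
        qed
        have "real b * R a \<le> real l * (\<Sum>j<b. Q (a*l + j))"
          using avg[OF cdec less_imp_le[OF bl]] by (simp add: R_def)
        moreover have "(\<Sum>j<b. R' (a*l + j)) = real b * R a / l"
          using bl by (simp add: R'blk)
        ultimately have "real l * (\<Sum>j<b. R' (a*l + j)) \<le> real l * (\<Sum>j<b. Q (a*l + j))"
          using lpos by (simp add: field_simps)
        then show ?thesis using lpos by (simp only: mult_le_cancel_left_pos)
      qed
      moreover have "sum R' {..<a*l} = sum Q {..<a*l}" using sumR' sumR by simp
      ultimately have "sum R' {..<K} \<le> sum Q {..<K}" unfolding Kab sum_add_split by simp
      then show "topk (n*l) R' K \<le> topk (n*l) Q K"
        using topk_sorted[OF dQ K] topk_sorted[OF dR' K] by simp
    qed
    have HQ: "entropy (n*l) Q \<le> entropy (n*l) R'" by (rule schur[OF QP R'P majQ])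
    have HR': "entropy (n*l) R' = entropy n R + ln (real l)"
    proof -
      have nR: "\<forall>i<n. 0 \<le> R i" using RP by (simp add: Prob_dec_def Prob_def)
      have trm: "R i * ln (R i / l) = R i * ln (R i) - R i * ln l" if "i < n" for i
      proof (cases "R i = 0")
        case True then show ?thesis by simp
      next
        case False then have "0 < R i" using nR that by force
        then show ?thesis using lpos by (simp add: ln_div algebra_simps)
      qed
      have "(\<Sum>k<n*l. R' k * ln (R' k)) = (\<Sum>i<n. \<Sum>j<l. R i / l * ln (R i / l))"
        unfolding sum_blocks by (intro sum.cong refl) (simp add: R'blk)
      also have "\<dots> = (\<Sum>i<n. R i * ln (R i / l))" using lpos by simp
      also have "\<dots> = (\<Sum>i<n. R i * ln (R i) - R i * ln l)" using trm by simp
      also have "\<dots> = (\<Sum>i<n. R i * ln (R i)) - ln l" using RP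
        by (simp add: sum_subtractf sum_distrib_right[symmetric] Prob_dec_def Prob_def)
      finally show ?thesis unfolding entropy_def by simp
    qed
    show ?thesis using HQ HR' HR unfolding Q_def P_def AQ_def AP_def by simp
  qed
qed

end
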